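(* Let $D$ be the automaton built from complete DFAs $A,B,C$ as described in the context, let $i$ be a state of $A$, and let $S,S'\subseteq Q_B\times Q_C$ be tableaux with $S\rightarrow S'$. Then the states $(i,S)$ and $(i,S')$ of $D$ are equivalent, i.e. for every $w\in\Sigma^*$, $(i,S)\cdot w\in F_D$ iff $(i,S')\cdot w\in F_D$.
   Context: Let $A=(\Sigma,Q_A=\{0,\dots,m-1\},0,F_A,\cdot)$, $B=(\Sigma,Q_B=\{q_0,\dots,q_{n-1}\},q_0,F_B,\cdot)$, $C=(\Sigma,Q_C=\{r_0,\dots,r_{p-1}\},r_0,F_C,\cdot)$ be complete DFAs. $D=(\Sigma,Q_A\times 2^{Q_B\times Q_C},i_D,F_D,\cdot)$ where $i_D=(0,\emptyset)$ if $0\notin F_A$ and $i_D=(0,\{(q_0,r_0)\})$ otherwise; $(i,S)\in F_D$ iff $S$ contains a pair $(q,r)$ with exactly one of $q\in F_B$, $r\in F_C$; and for $a\in\Sigma$, $(i,S)\cdot a=(i\cdot a,S\cdot a)$ if $i\cdot a\notin F_A$ and $(i\cdot a,S\cdot a\cup\{(q_0,r_0)\})$ otherwise, with $S\cdot a=\{(q\cdot a,r\cdot a):(q,r)\in S\}$; this extends to words. A tableau is a subset of $Q_B\times Q_C$. Write $S\rightarrow S'$ if $S'=S\cup\{(q_y,r_{x'})\}$ where $(q_y,r_{x'})\notin S$ and $(q_x,r_{x'}),(q_x,r_{y'}),(q_y,r_{y'})\in S$ for some $q_x\neq q_y$, $r_{x'}\neq r_{y'}$ (i.e. $S'$ completes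 a right triangle of $S$ into a rectangle). *)

theory Defs
  imports Main
begin

definition complete_dfa ::
  "'s set \<Rightarrow> 'q set \<Rightarrow> 'q \<Rightarrow> 'q set \<Rightarrow> ('q \<Rightarrow> 's \<Rightarrow> 'q) \<Rightarrow> bool" where
  "complete_dfa Sig Q q0 F delta \<longleftrightarrow>
     finite Sig \<and> finite Q \<and> q0 \<in> Q \<and> F \<subseteq> Q \<and>
     (\<forall>q\<in>Q. \<forall>a\<in>Sig. delta q a \<in> Q)"

definition tab_trans ::
  "('b \<Rightarrow> 's \<Rightarrow> 'b) \<Rightarrow> ('c \<Rightarrow> 's \<Rightarrow> 'c) \<Rightarrow> ('b \<times> 'c) set \<Rightarrow> 's \<Rightarrow> ('b \<times> 'c) set" where
  "tab_trans dB dC S a = (\<lambda>(q, r). (dB q a, dC r a)) ` S"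

definition D_step ::
  "('a \<Rightarrow> 's \<Rightarrow> 'a) \<Rightarrow> 'a set \<Rightarrow> ('b \<Rightarrow> 's \<Rightarrow> 'b) \<Rightarrow> 'b \<Rightarrow> ('c \<Rightarrow> 's \<Rightarrow> 'c) \<Rightarrow> 'c \<Rightarrow>
   'a \<times> ('b \<times> 'c) set \<Rightarrow> 's \<Rightarrow> 'a \<times> ('b \<times> 'c) set" where
  "D_step dA FA dB q0 dC r0 st a =
     (let i' = dA (fst st) a; S' = tab_trans dB dC (snd st) a
      in if i' \<in> FA then (i', insert (q0, r0) S') else (i', S'))"

definition D_run ::
  "('a \<Rightarrow> 's \<Rightarrow> 'a) \<Rightarrow> 'a set \<Rightarrow> ('b \<Rightarrow> 's \<Rightarrow> 'b) \<Rightarrow> 'b \<Rightarrow> ('c \<Rightarrow> 's \<Rightarrow> 'c) \<Rightarrow> 'c \<Rightarrow>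
   'a \<times> ('b \<times> 'c) set \<Rightarrow> 's list \<Rightarrow> 'a \<times> ('b \<times> 'c) set" where
  "D_run dA FA dB q0 dC r0 st w = foldl (D_step dA FA dB q0 dC r0) st w"

definition D_final :: "'b set \<Rightarrow> 'c set \<Rightarrow> 'a \<times> ('b \<times> 'c) set \<Rightarrow> bool" where
  "D_final FB FC st \<longleftrightarrow> (\<exists>(q, r) \<in> snd st. (q \<in> FB) \<noteq> (r \<in> FC))"

text \<open>S \<rightarrow> S': S' completes a right triangle of S into a rectangle.\<close>
definition tab_arrow :: "('b \<times> 'c) set \<Rightarrow> ('b \<times> 'c) set \<Rightarrow> bool" where
  "tab_arrow S S' \<longleftrightarrow>
     (\<exists>qx qy rx ry. qx \<noteq> qy \<and> rx \<noteq> ry \<and> (qy, rx) \<notin> S \<and>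
        (qx, rx) \<in> S \<and> (qx, ry) \<in> S \<and> (qy, ry) \<in> S \<and> S' = insert (qy, rx) S)"

end

theory Submission
  imports Defs
begin

lemma final_step:
  assumes "(qx, rx) \<in> snd st" "(qx, ry) \<in> snd st" "(qy, ry) \<in> snd st"
    and "snd st' = insert (qy, rx) (snd st)"
  shows "D_final FB FC st \<longleftrightarrow> D_final FB FC st'"
  using assms unfolding D_final_def by (cases "qx \<in> FB"; cases "qy \<in> FB"; cases "rx \<in> FC"; cases "ry \<in> FC"; fastforce)

lemma run_inv:
  assumes "(qx, rx) \<in> snd st" "(qx, ry) \<in> snd st" "(qy, ry) \<in> snd st"
    and "snd st' = insert (qy, rx) (snd st)" "fst st' = fst st"
  shows "D_final FB FC (D_run dA FA dB q0 dC r0 st w) \<longleftrightarrow>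
         D_final FB FC (D_run dA FA dB q0 dC r0 st' w)"
  using assms
proof (induction w arbitrary: st st' qx qy rx ry)
  case Nil
  then show ?case using final_step[of qx rx st ry qy st'] by (simp add: D_run_def)
next
  case (Cons a w)
  let ?s = "D_step dA FA dB q0 dC r0 st a" and ?s' = "D_step dA FA dB q0 dC r0 st' a"
  have m: "\<And>q r. (q,r) \<in> snd st \<Longrightarrow> (dB q a, dC r a) \<in> snd ?s"
    by (force simp: D_step_def Let_def tab_trans_def)
  have h: "(dB qx a, dC rx a) \<in> snd ?s" "(dB qx a, dC ry a) \<in> snd ?s" "(dB qy a, dC ry a) \<in> snd ?s"
    "snd ?s' = insert (dB qy a, dC rx a) (snd ?s)" "fst ?s' = fst ?s"
    using Cons.prems m by (auto simp: D_step_def Let_def tab_trans_def)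
  from Cons.IH[OF h] show ?case by (simp add: D_run_def)
qed

theorem lemma4:
  fixes Sig :: "'s set"
    and QA :: "'a set" and iA :: 'a and FA :: "'a set" and dA :: "'a \<Rightarrow> 's \<Rightarrow> 'a"
    and QB :: "'b set" and q0 :: 'b and FB :: "'b set" and dB :: "'b \<Rightarrow> 's \<Rightarrow> 'b"
    and QC :: "'c set" and r0 :: 'c and FC :: "'c set" and dC :: "'c \<Rightarrow> 's \<Rightarrow> 'c"
  assumes "complete_dfa Sig QA iA FA dA"
    and "complete_dfa Sig QB q0 FB dB"
    and "complete_dfa Sig QC r0 FC dC"
    and "i \<in> QA"
    and "S \<subseteq> QB \<times> QC" and "S' \<subseteq> QB \<times> QC"
    and "tab_arrow S S'"
  shows "\<forall>w \<in> lists Sig.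
           D_final FB FC (D_run dA FA dB q0 dC r0 (i, S) w) \<longleftrightarrow>
           D_final FB FC (D_run dA FA dB q0 dC r0 (i, S') w)"
proof
  fix w
  from assms(7) obtain qx qy rx ry where t: "(qx, rx) \<in> S" "(qx, ry) \<in> S" "(qy, ry) \<in> S"
    "S' = insert (qy, rx) S" unfolding tab_arrow_def by blast
  show "D_final FB FC (D_run dA FA dB q0 dC r0 (i, S) w) \<longleftrightarrow>
           D_final FB FC (D_run dA FA dB q0 dC r0 (i, S') w)"
    by (rule run_inv[of qx rx "(i,S)" ry qy "(i,S')"]) (use t in auto)
qed

end
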